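(* Let $\mathcal{X},\mathcal{Y}$ be finite, $P_X$ a distribution, $P_{Y|X}$ a channel with output $P_Y$, and let $M$ be a positive integer and $\mathscr{C}_M^n=\{X_1^n,\dots,X_M^n\}$ a codebook of $M$ independent codewords drawn from $P_{X^n}$. Fix $y^n\in\mathcal{T}^n_{Q_{\bar Y}}$ with $P_{Y^n}(y^n)>0$ and a conditional type $Q_{\bar X|\bar Y}\in\mathcal{P}_n(\mathcal{X}|Q_{\bar Y})$, let $Q_{\bar X\bar Y}=Q_{\bar X|\bar Y}Q_{\bar Y}$, $(\bar X,\bar Y)\sim Q_{\bar X\bar Y}$ and $x^n_{Q_{\bar X|\bar Y}}\in\mathcal{T}^n_{Q_{\bar X|\bar Y}}(y^n)$. Then \[ P_{Y^n}(y^n)\,\mathbb{E}\big[|Z_{Q_{\bar X\bar Y}}-\mathbb{E}[Z_{Q_{\bar X\bar Y}}]|\big]\le P_{Y^n|X^n}(y^n|x^n_{Q_{\bar X|\bar Y}})\,\mathfrak{Y}(M,Q_{\bar X\bar Y})=\exp\big(-n\,\mathbb{E}[\imath_{P_{Y|X}}(\bar Y|\bar X)]\big)\,\mathfrak{Y}(M,Q_{\bar X\bar Y}). \]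
   Context: $P_{X^n},P_{Y^n}$ are i.i.d. extensions of $P_X,P_Y$; $P_{Y^n|X^n}(y^n|x^n)=\prod_iP_{Y|X}(y_i|x_i)$. For an $n$-type $Q_{\bar Y}$, $\mathcal{T}^n_{Q_{\bar Y}}$ is its type class. A conditional type of $x^n$ given $y^n$ is $Q_{\bar X|\bar Y}$ with $Q_{\bar X|\bar Y}(a|b)Q_{\bar Y}(b)$ equal to the joint empirical distribution of $(x^n,y^n)$; $\mathcal{P}_n(\mathcal{X}|Q_{\bar Y})$ is the set of such conditional types and $\mathcal{T}^n_{Q_{\bar X|\bar Y}}(y^n)$ the set of $x^n$ with that conditional type given $y^n$. Define $N_{Q_{\bar X|\bar Y}}(y^n)=\sum_{j=1}^M1\{X_j^n\in\mathcal{T}^n_{Q_{\bar X|\bar Y}}(y^n)\}$, $p_{Q_{\bar X|\bar Y}}(y^n)=\mathbb{P}[X^n\in\mathcal{T}^n_{Q_{\bar X|\bar Y}}(y^n)]$ for $X^n\sim P_{X^n}$, $l_{Q_{\bar X|\bar Y}}(y^n)=P_{Y^n|X^n}(y^n|x^n_{Q_{\bar X|\bar Y}})/P_{Y^n}(y^n)$, $Z_{Q_{\bar X\bar Y}}=\frac1MN_{Q_{\bar X|\bar Y}}(y^n)\,l_{Q_{\bar X|\bar Y}}(y^n)$, and $\mathfrak{Y}(M,Q_{\bar X\bar Y})=\min\{2p_{Q_{\bar X|\bar Y}}(y^n),\,M^{-1/2}p_{Q_{\bar X|\bar Y}}^{1/2}(y^n)\}$. $\imath_{P_{Y|X}}(y|x)=\log\frac1{P_{Y|X}(y|x)}$;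 logs and exps use a common base. *)

theory Defs
  imports "HOL-Probability.Probability"
begin

text \<open>Length-n sequences are functions nat => 'a; only the positions i < n matter.
  The i.i.d. extension of a pmf is a product pmf over the positions {..<n}.\<close>

definition iid_pmf :: "nat \<Rightarrow> 'a pmf \<Rightarrow> (nat \<Rightarrow> 'a) pmf" where
  "iid_pmf n P = Pi_pmf {..<n} undefined (\<lambda>_. P)"

definition out_pmf :: "'x pmf \<Rightarrow> ('x \<Rightarrow> 'y pmf) \<Rightarrow> 'y pmf" where
  "out_pmf PX W = bind_pmf PX W"

definition seq_prob :: "nat \<Rightarrow> 'y pmf \<Rightarrow> (nat \<Rightarrow> 'y) \<Rightarrow> real" where
  "seq_prob n P y = (\<Prod>i<n. pmf P (y i))"

definition chan_prob :: "nat \<Rightarrow> ('x \<Rightarrow> 'y pmf) \<Rightarrow> (nat \<Rightarrow> 'x) \<Rightarrow> (nat \<Rightarrow> 'y) \<Rightarrow> real" where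
  "chan_prob n W x y = (\<Prod>i<n. pmf (W (x i)) (y i))"

definition n_type :: "nat \<Rightarrow> ('a::finite \<Rightarrow> real) \<Rightarrow> bool" where
  "n_type n Q \<longleftrightarrow> (\<forall>b. Q b \<ge> 0) \<and> (\<Sum>b\<in>UNIV. Q b) = 1 \<and> (\<forall>b. \<exists>k::nat. Q b = real k / real n)"

definition seq_type_class :: "nat \<Rightarrow> ('a \<Rightarrow> real) \<Rightarrow> (nat \<Rightarrow> 'a) set" where
  "seq_type_class n Q = {y. \<forall>b. real (card {i. i < n \<and> y i = b}) = real n * Q b}"

text \<open>Conditional type class T^n_{Q_{X|Y}}(y^n): x^n whose joint empirical distribution with y^n
  equals Q_{X|Y}(a|b) Q_Y(b).  A conditional type is represented as Qc a b = Q_{X|Y}(a|b).\<close>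
definition cond_type_class ::
  "nat \<Rightarrow> ('x \<Rightarrow> 'y \<Rightarrow> real) \<Rightarrow> ('y \<Rightarrow> real) \<Rightarrow> (nat \<Rightarrow> 'y) \<Rightarrow> (nat \<Rightarrow> 'x) set" where
  "cond_type_class n Qc QY y =
     {x. \<forall>a b. real (card {i. i < n \<and> x i = a \<and> y i = b}) = real n * (Qc a b * QY b)}"

definition cond_types :: "nat \<Rightarrow> ('y::finite \<Rightarrow> real) \<Rightarrow> ('x::finite \<Rightarrow> 'y \<Rightarrow> real) set" where
  "cond_types n QY =
     {Qc. (\<forall>a b. Qc a b \<ge> 0) \<and> (\<forall>b. (\<Sum>a\<in>UNIV. Qc a b) = 1) \<and>
          (\<exists>x y. y \<in> seq_type_class n QY \<and> x \<in> cond_type_class n Qc QY y)}"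

definition info_dens :: "('x \<Rightarrow> 'y pmf) \<Rightarrow> 'x \<Rightarrow> 'y \<Rightarrow> ereal" where
  "info_dens W a b = (if pmf (W a) b = 0 then \<infinity> else ereal (- ln (pmf (W a) b)))"

text \<open>E[i(Ybar|Xbar)] for (Xbar,Ybar) ~ Q_{XY} (with 0 * infinity = 0).\<close>
definition exp_info_dens :: "('x::finite \<Rightarrow> 'y::finite \<Rightarrow> real) \<Rightarrow> ('x \<Rightarrow> 'y pmf) \<Rightarrow> ereal" where
  "exp_info_dens QXY W = (\<Sum>(a,b)\<in>UNIV. ereal (QXY a b) * info_dens W a b)"

text \<open>exp on the extended reals, with exp(-infinity) = 0 (the value at +infinity never occurs).\<close>
definition exp_ext :: "ereal \<Rightarrow> real" where
  "exp_ext e = (case e of ereal r \<Rightarrow> exp r | PInfty \<Rightarrow> 0 | MInfty \<Rightarrow> 0)"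

definition codebook_pmf :: "nat \<Rightarrow> nat \<Rightarrow> 'x pmf \<Rightarrow> (nat \<Rightarrow> (nat \<Rightarrow> 'x)) pmf" where
  "codebook_pmf M n PX = Pi_pmf {..<M} undefined (\<lambda>_. iid_pmf n PX)"

definition N_count :: "nat \<Rightarrow> (nat \<Rightarrow> 'x) set \<Rightarrow> (nat \<Rightarrow> (nat \<Rightarrow> 'x)) \<Rightarrow> nat" where
  "N_count M T C = card {j. j < M \<and> C j \<in> T}"

definition frakY :: "nat \<Rightarrow> real \<Rightarrow> real" where
  "frakY M p = min (2 * p) (sqrt p / sqrt (real M))"

end

theory Submission
  imports Defs
begin


lemma bin_rec:
  fixes f :: "nat \<Rightarrow> real"
  assumes p: "p \<in> {0..1}"
  shows "measure_pmf.expectation (binomial_pmf (Suc n) p) f =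
     p * measure_pmf.expectation (binomial_pmf n p) (\<lambda>k. f (Suc k)) +
     (1 - p) * measure_pmf.expectation (binomial_pmf n p) f"
proof -
  have eq: "binomial_pmf (Suc n) p = bernoulli_pmf p \<bind>
      (\<lambda>b. map_pmf (\<lambda>k. (if b then 1 else 0) + k) (binomial_pmf n p))"
    unfolding binomial_pmf_Suc[OF p] map_pmf_def by simp
  have "measure_pmf.expectation (binomial_pmf (Suc n) p) f =
     (\<Sum>b\<in>UNIV. pmf (bernoulli_pmf p) b *\<^sub>R measure_pmf.expectation
        (map_pmf (\<lambda>k. (if b then 1 else 0) + k) (binomial_pmf n p)) f)"
    unfolding eq
    by (rule pmf_expectation_bind) (use p finite_set_pmf_binomial_pmf[OF p] in auto)
  also have "\<dots> = p * measure_pmf.expectation (binomial_pmf n p) (\<lambda>k. f (Suc k)) +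
     (1 - p) * measure_pmf.expectation (binomial_pmf n p) f"
    using p by (simp add: UNIV_bool)
  finally show ?thesis .
qed

lemma bin_mean:
  assumes p: "p \<in> {0..1}"
  shows "measure_pmf.expectation (binomial_pmf n p) real = real n * p"
proof (induction n)
  case 0 then show ?case using p by (simp add: binomial_pmf_0)
next
  case (Suc n)
  have i: "integrable (binomial_pmf n p) (real :: nat \<Rightarrow> real)" using p by auto
  have "measure_pmf.expectation (binomial_pmf n p) (\<lambda>k. real (Suc k))
      = measure_pmf.expectation (binomial_pmf n p) real + 1"
    using i by (simp add: Bochner_Integration.integral_add)
  then show ?case using Suc bin_rec[OF p, of n real] by (simp add: algebra_simps)
qed

lemma bin_sq:
  assumes p: "p \<in> {0..1}"
  shows "measure_pmf.expectation (binomial_pmf n p) (\<lambda>k. (real k)^2) = real n * p * (1 - p) + (real n * p)^2"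
proof (induction n)
  case 0 then show ?case using p by (simp add: binomial_pmf_0)
next
  case (Suc n)
  have "measure_pmf.expectation (binomial_pmf n p) (\<lambda>k. (real (Suc k))^2)
      = measure_pmf.expectation (binomial_pmf n p) (\<lambda>k. (real k)^2 + 2 * real k + 1)"
    by (simp add: power2_eq_square algebra_simps)
  also have "\<dots> = measure_pmf.expectation (binomial_pmf n p) (\<lambda>k. (real k)^2)
       + 2 * measure_pmf.expectation (binomial_pmf n p) real + 1"
    using p by (simp add: Bochner_Integration.integral_add)
  finally show ?case using Suc bin_rec[OF p, of n "\<lambda>k. (real k)^2"] bin_mean[OF p, of n]
    by (simp add: algebra_simps power2_eq_square)
qed

lemma bin_sqdev:
  assumes p: "p \<in> {0..1}" and M: "M > 0"
  shows "measure_pmf.expectation (binomial_pmf M p) (\<lambda>k. (real k / real M - p)^2) \<le> p / real M"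
proof -
  have "measure_pmf.expectation (binomial_pmf M p) (\<lambda>k. (real k / real M - p)^2)
     = measure_pmf.expectation (binomial_pmf M p) (\<lambda>k. (real k)^2 / (real M)^2 - (2 * p / real M) * real k + p^2)"
    using M by (intro Bochner_Integration.integral_cong refl) (simp add: power2_eq_square field_simps)
  also have "\<dots> = measure_pmf.expectation (binomial_pmf M p) (\<lambda>k. (real k)^2) / (real M)^2
      - (2 * p / real M) * measure_pmf.expectation (binomial_pmf M p) real + p^2"
    using p by (simp add: Bochner_Integration.integral_add Bochner_Integration.integral_diff)
  also have "\<dots> = p * (1 - p) / real M"
    using M unfolding bin_sq[OF p] bin_mean[OF p] by (simp add: power2_eq_square field_simps)
  also have "\<dots> \<le> p / real M" using p M by (simp add: divide_right_mono mult_left_le)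
  finally show ?thesis .
qed

lemma bin_dev:
  assumes p: "p \<in> {0..1}" and M: "M > 0"
  shows "measure_pmf.expectation (binomial_pmf M p) (\<lambda>k. \<bar>real k / real M - p\<bar>) \<le> min (2 * p) (sqrt p / sqrt (real M))"
proof -
  let ?E = "measure_pmf.expectation (binomial_pmf M p)"
  have A: "?E (\<lambda>k. \<bar>real k / real M - p\<bar>) \<le> 2 * p"
  proof -
    have "?E (\<lambda>k. \<bar>real k / real M - p\<bar>) \<le> ?E (\<lambda>k. real k / real M + p)"
    proof (intro integral_mono)
      fix k :: nat
      have "real k / real M \<ge> 0" by simp
      then show "\<bar>real k / real M - p\<bar> \<le> real k / real M + p" using p by (simp add: abs_le_iff)
    qed (use p in auto)
    also have "\<dots> = ?E real / real M + p"
      using p by (simp add: Bochner_Integration.integral_add)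
    also have "\<dots> = 2 * p" using M unfolding bin_mean[OF p] by simp
    finally show ?thesis .
  qed
  have B: "?E (\<lambda>k. \<bar>real k / real M - p\<bar>) \<le> sqrt p / sqrt (real M)"
  proof (cases "p = 0")
    case True
    then show ?thesis using A by simp
  next
    case False
    define t where "t = sqrt (p / real M)"
    have t: "t > 0" using False p M by (simp add: t_def)
    have tt: "t * t = p / real M" using p M by (simp add: t_def)
    have pw: "\<bar>x\<bar> \<le> (x^2 / t + t) / 2" for x :: real
    proof -
      have "0 \<le> (\<bar>x\<bar> - t)^2" by simp
      hence "2 * t * \<bar>x\<bar> \<le> x^2 + t * t" by (simp add: power2_eq_square algebra_simps)
      thus ?thesis using t by (simp add: field_simps)
    qed
    have "?E (\<lambda>k. \<bar>real k / real M - p\<bar>) \<le> ?E (\<lambda>k. ((real k / real M - p)^2 / t + t) / 2)"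
      using p pw by (intro integral_mono) auto
    also have "\<dots> = (?E (\<lambda>k. (real k / real M - p)^2) / t + t) / 2"
      using p by (simp add: Bochner_Integration.integral_add)
    also have "\<dots> \<le> (p / real M / t + t) / 2"
    proof -
      have "?E (\<lambda>k. (real k / real M - p)^2) / t \<le> p / real M / t"
        using bin_sqdev[OF p M] t by (intro divide_right_mono) auto
      moreover have "\<And>a b::real. a \<le> b \<Longrightarrow> (a + t) / 2 \<le> (b + t) / 2" by simp
      ultimately show ?thesis by blast
    qed
    also have "\<dots> = t"
    proof -
      have "p = t * t * real M" using tt M by (simp add: field_simps)
      then show ?thesis using t M by (simp add: field_simps)
    qed
    also have "t = sqrt p / sqrt (real M)" by (simp add: t_def real_sqrt_divide)
    finally show ?thesis .
  qed
  show ?thesis using A B by simp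
qed



lemma cb_bin:
  "map_pmf (N_count M T) (codebook_pmf M n PX) = binomial_pmf M (measure_pmf.prob (iid_pmf n PX) T)"
proof -
  define q where "q = measure_pmf.prob (iid_pmf n PX) T"
  have q: "q \<in> {0..1}" by (simp add: q_def)
  have bern: "map_pmf (\<lambda>x. x \<in> T) (iid_pmf n PX) = bernoulli_pmf q"
  proof (rule pmf_eqI)
    fix b :: bool
    show "pmf (map_pmf (\<lambda>x. x \<in> T) (iid_pmf n PX)) b = pmf (bernoulli_pmf q) b"
    proof (cases b)
      case True
      then show ?thesis using q by (simp add: pmf_map vimage_def q_def)
    next
      case False
      have "measure_pmf.prob (iid_pmf n PX) {x. x \<notin> T} = 1 - q"
        unfolding q_def using measure_pmf.prob_compl[of T "iid_pmf n PX"]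
        by (simp add: Compl_eq_Diff_UNIV[symmetric] Collect_neg_eq)
      then show ?thesis using q False by (simp add: pmf_map vimage_def)
    qed
  qed
  have "binomial_pmf M q = map_pmf (\<lambda>f. card {x\<in>{..<M}. f x})
          (Pi_pmf {..<M} (undefined \<in> T) (\<lambda>_. bernoulli_pmf q))"
    by (rule binomial_pmf_altdef') (use q in auto)
  also have "Pi_pmf {..<M} (undefined \<in> T) (\<lambda>_. bernoulli_pmf q)
      = Pi_pmf {..<M} (undefined \<in> T) (\<lambda>_. map_pmf (\<lambda>x. x \<in> T) (iid_pmf n PX))"
    by (simp add: bern)
  also have "\<dots> = map_pmf (\<lambda>h. (\<lambda>x. x \<in> T) \<circ> h) (Pi_pmf {..<M} undefined (\<lambda>_. iid_pmf n PX))"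
    by (rule Pi_pmf_map) auto
  finally have "binomial_pmf M q = map_pmf (\<lambda>C. card {j. j < M \<and> C j \<in> T}) (codebook_pmf M n PX)"
    by (simp add: map_pmf_comp codebook_pmf_def o_def)
  moreover have "N_count M T = (\<lambda>C. card {j. j < M \<and> C j \<in> T})"
    by (rule ext) (simp add: N_count_def)
  ultimately show ?thesis by (simp add: q_def)
qed



lemma chan_prod:
  fixes W :: "'x::finite \<Rightarrow> 'y::finite pmf"
  shows "chan_prob n W x y = (\<Prod>v\<in>UNIV. pmf (W (fst v)) (snd v) ^ card {i. i < n \<and> x i = fst v \<and> y i = snd v})"
proof -
  have "chan_prob n W x y = (\<Prod>v\<in>UNIV. \<Prod>i\<in>{i. i \<in> {..<n} \<and> (x i, y i) = v}. pmf (W (x i)) (y i))"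
    unfolding chan_prob_def by (rule prod.group[symmetric]) auto
  also have "\<dots> = (\<Prod>v\<in>UNIV. pmf (W (fst v)) (snd v) ^ card {i. i < n \<and> x i = fst v \<and> y i = snd v})"
  proof (rule prod.cong[OF refl])
    fix v :: "'x \<times> 'y"
    have "(\<Prod>i\<in>{i. i \<in> {..<n} \<and> (x i, y i) = v}. pmf (W (x i)) (y i))
        = (\<Prod>i\<in>{i. i < n \<and> x i = fst v \<and> y i = snd v}. pmf (W (fst v)) (snd v))"
      by (rule prod.cong) auto
    then show "(\<Prod>i\<in>{i. i \<in> {..<n} \<and> (x i, y i) = v}. pmf (W (x i)) (y i)) =
        pmf (W (fst v)) (snd v) ^ card {i. i < n \<and> x i = fst v \<and> y i = snd v}"
      by simp
  qed
  finally show ?thesis .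
qed

lemma chan_exp:
  fixes W :: "'x::finite \<Rightarrow> 'y::finite pmf" and QXY :: "'x \<Rightarrow> 'y \<Rightarrow> real"
  assumes n: "n > 0"
    and cnt: "\<And>a b. real (card {i. i < n \<and> x i = a \<and> y i = b}) = real n * QXY a b"
  shows "chan_prob n W x y = exp_ext (- (ereal (real n) * exp_info_dens QXY W))"
proof -
  define c where "c v = card {i. i < n \<and> x i = fst v \<and> y i = snd v}" for v :: "'x \<times> 'y"
  have cv: "real (c v) = real n * QXY (fst v) (snd v)" for v
    unfolding c_def by (rule cnt)
  have E: "exp_info_dens QXY W = (\<Sum>v\<in>UNIV. ereal (QXY (fst v) (snd v)) * info_dens W (fst v) (snd v))"
    unfolding exp_info_dens_def by (simp add: case_prod_beta)
  have C: "chan_prob n W x y = (\<Prod>v\<in>UNIV. pmf (W (fst v)) (snd v) ^ c v)"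
    unfolding c_def by (rule chan_prod)
  show ?thesis
  proof (cases "\<exists>v. c v > 0 \<and> pmf (W (fst v)) (snd v) = 0")
    case True
    then obtain v where v: "c v > 0" "pmf (W (fst v)) (snd v) = 0" by blast
    have "chan_prob n W x y = 0" unfolding C using v
      by (subst prod_zero_iff) (auto intro!: exI[of _ "fst v"] exI[of _ "snd v"])
    moreover have "QXY (fst v) (snd v) > 0" using cv[of v] v n
      by (metis of_nat_0_less_iff zero_less_mult_iff of_nat_0_le_iff not_less)
    hence "ereal (QXY (fst v) (snd v)) * info_dens W (fst v) (snd v) = \<infinity>"
      using v by (simp add: info_dens_def)
    hence "exp_info_dens QXY W = \<infinity>" unfolding E
      by (subst sum_Pinfty) auto
    ultimately show ?thesis using n by (simp add: exp_ext_def)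
  next
    case False
    define L where "L v = (if pmf (W (fst v)) (snd v) = 0 then 0 else - ln (pmf (W (fst v)) (snd v)))" for v
    have T: "ereal (QXY (fst v) (snd v)) * info_dens W (fst v) (snd v) = ereal (QXY (fst v) (snd v) * L v)" for v
    proof (cases "pmf (W (fst v)) (snd v) = 0")
      case True
      then have "c v = 0" using False by (cases v) auto
      then have "QXY (fst v) (snd v) = 0" using cv[of v] n by simp
      then show ?thesis by (simp add: L_def zero_ereal_def[symmetric])
    next
      case False
      then show ?thesis by (simp add: L_def info_dens_def)
    qed
    have "exp_ext (- (ereal (real n) * exp_info_dens QXY W))
        = exp (\<Sum>v\<in>UNIV. - (real n * QXY (fst v) (snd v) * L v))"
      unfolding E T by (simp add: exp_ext_def sum_negf sum_distrib_left mult.assoc)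
    also have "\<dots> = (\<Prod>v\<in>UNIV. exp (- (real n * QXY (fst v) (snd v) * L v)))"
      by (simp add: exp_sum)
    also have "\<dots> = (\<Prod>v\<in>UNIV. pmf (W (fst v)) (snd v) ^ c v)"
    proof (rule prod.cong[OF refl])
      fix v
      show "exp (- (real n * QXY (fst v) (snd v) * L v)) = pmf (W (fst v)) (snd v) ^ c v"
      proof (cases "pmf (W (fst v)) (snd v) = 0")
        case True
        then have "c v = 0" using False by (cases v) auto
        then show ?thesis using True by (simp add: L_def)
      next
        case F: False
        have pos: "pmf (W (fst v)) (snd v) > 0" using F pmf_nonneg[of "W (fst v)" "snd v"] by linarith
        have "exp (- (real n * QXY (fst v) (snd v) * L v)) = exp (real (c v) * ln (pmf (W (fst v)) (snd v)))"
          using F by (simp add: L_def cv)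
        also have "\<dots> = pmf (W (fst v)) (snd v) ^ c v"
          using pos by (simp add: exp_of_nat_mult)
        finally show ?thesis .
      qed
    qed
    finally show ?thesis using C by simp
  qed
qed



theorem lemma3:
  fixes PX :: "'x::finite pmf" and W :: "'x \<Rightarrow> 'y::finite pmf"
    and M n :: nat and QY :: "'y \<Rightarrow> real" and Qc :: "'x \<Rightarrow> 'y \<Rightarrow> real"
    and y :: "nat \<Rightarrow> 'y" and xQ :: "nat \<Rightarrow> 'x"
  assumes "M > 0"
    and "n_type n QY"
    and "y \<in> seq_type_class n QY"
    and "seq_prob n (out_pmf PX W) y > 0"
    and "Qc \<in> cond_types n QY"
    and "xQ \<in> cond_type_class n Qc QY y"
  shows
   "let T = cond_type_class n Qc QY y;
        p = measure_pmf.prob (iid_pmf n PX) T;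
        l = chan_prob n W xQ y / seq_prob n (out_pmf PX W) y;
        Z = (\<lambda>C. real (N_count M T C) * l / real M);
        EZ = measure_pmf.expectation (codebook_pmf M n PX) Z;
        QXY = (\<lambda>a b. Qc a b * QY b)
    in seq_prob n (out_pmf PX W) y *
         measure_pmf.expectation (codebook_pmf M n PX) (\<lambda>C. \<bar>Z C - EZ\<bar>)
         \<le> chan_prob n W xQ y * frakY M p
     \<and> chan_prob n W xQ y * frakY M p
         = exp_ext (- (ereal (real n) * exp_info_dens QXY W)) * frakY M p"

proof -
  define T where "T = cond_type_class n Qc QY y"
  define p where "p = measure_pmf.prob (iid_pmf n PX) T"
  define s where "s = seq_prob n (out_pmf PX W) y"
  define c where "c = chan_prob n W xQ y"
  define l where "l = c / s"
  have s: "s > 0" using assms(4) by (simp add: s_def)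
  have c0: "c \<ge> 0" unfolding c_def chan_prob_def by (intro prod_nonneg) auto
  have l0: "l \<ge> 0" using s c0 by (simp add: l_def)
  have pr: "p \<in> {0..1}" by (simp add: p_def)
  have npos: "n > 0"
  proof (rule ccontr)
    assume "\<not> n > 0"
    then have "n = 0" by simp
    with assms(2) have "\<forall>b. QY b = 0" unfolding n_type_def by auto
    with assms(2) show False unfolding n_type_def by simp
  qed
  have MB: "map_pmf (N_count M T) (codebook_pmf M n PX) = binomial_pmf M p"
    unfolding p_def by (rule cb_bin)
  have tr: "measure_pmf.expectation (codebook_pmf M n PX) (\<lambda>C. h (N_count M T C))
      = measure_pmf.expectation (binomial_pmf M p) h" for h :: "nat \<Rightarrow> real"
    by (simp flip: MB)
  define EZ where "EZ = measure_pmf.expectation (codebook_pmf M n PX) (\<lambda>C. real (N_count M T C) * l / real M)"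
  have EZ: "EZ = l * p"
  proof -
    have "EZ = measure_pmf.expectation (codebook_pmf M n PX) (\<lambda>C. (\<lambda>k. l / real M * real k) (N_count M T C))"
      unfolding EZ_def by (intro Bochner_Integration.integral_cong refl) (simp add: field_simps)
    also have "\<dots> = measure_pmf.expectation (binomial_pmf M p) (\<lambda>k. l / real M * real k)"
      by (rule tr)
    also have "\<dots> = l / real M * (real M * p)" by (simp add: bin_mean[OF pr])
    also have "\<dots> = l * p" using assms(1) by simp
    finally show ?thesis .
  qed
  have "measure_pmf.expectation (codebook_pmf M n PX) (\<lambda>C. \<bar>real (N_count M T C) * l / real M - EZ\<bar>)
      = measure_pmf.expectation (binomial_pmf M p) (\<lambda>k. l * \<bar>real k / real M - p\<bar>)"
    unfolding EZ
  proof -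
    have "measure_pmf.expectation (codebook_pmf M n PX) (\<lambda>C. \<bar>real (N_count M T C) * l / real M - l * p\<bar>)
       = measure_pmf.expectation (codebook_pmf M n PX) (\<lambda>C. (\<lambda>k. l * \<bar>real k / real M - p\<bar>) (N_count M T C))"
    proof (intro Bochner_Integration.integral_cong refl)
      fix C
      have e: "real (N_count M T C) * l / real M - l * p = l * (real (N_count M T C) / real M - p)"
        by (simp add: algebra_simps)
      show "\<bar>real (N_count M T C) * l / real M - l * p\<bar> = (\<lambda>k. l * \<bar>real k / real M - p\<bar>) (N_count M T C)"
        unfolding e using l0 by (simp add: abs_mult)
    qed
    also have "\<dots> = measure_pmf.expectation (binomial_pmf M p) (\<lambda>k. l * \<bar>real k / real M - p\<bar>)"
      by (rule tr)
    finally show "measure_pmf.expectation (codebook_pmf M n PX) (\<lambda>C. \<bar>real (N_count M T C) * l / real M - l * p\<bar>)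
       = measure_pmf.expectation (binomial_pmf M p) (\<lambda>k. l * \<bar>real k / real M - p\<bar>)" .
  qed
  also have "\<dots> = l * measure_pmf.expectation (binomial_pmf M p) (\<lambda>k. \<bar>real k / real M - p\<bar>)"
    by simp
  finally have EA: "measure_pmf.expectation (codebook_pmf M n PX) (\<lambda>C. \<bar>real (N_count M T C) * l / real M - EZ\<bar>)
      = l * measure_pmf.expectation (binomial_pmf M p) (\<lambda>k. \<bar>real k / real M - p\<bar>)" .
  have P1: "s * measure_pmf.expectation (codebook_pmf M n PX) (\<lambda>C. \<bar>real (N_count M T C) * l / real M - EZ\<bar>)
      \<le> c * frakY M p"
  proof -
    have "s * l = c" using s by (simp add: l_def)
    then have "s * measure_pmf.expectation (codebook_pmf M n PX) (\<lambda>C. \<bar>real (N_count M T C) * l / real M - EZ\<bar>)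
        = c * measure_pmf.expectation (binomial_pmf M p) (\<lambda>k. \<bar>real k / real M - p\<bar>)"
      unfolding EA by (simp add: mult.assoc[symmetric])
    also have "\<dots> \<le> c * frakY M p"
      unfolding frakY_def using bin_dev[OF pr assms(1)] c0 by (rule mult_left_mono)
    finally show ?thesis .
  qed
  have P2: "c = exp_ext (- (ereal (real n) * exp_info_dens (\<lambda>a b. Qc a b * QY b) W))"
    unfolding c_def
  proof (rule chan_exp[OF npos])
    fix a b
    show "real (card {i. i < n \<and> xQ i = a \<and> y i = b}) = real n * (Qc a b * QY b)"
      using assms(6) unfolding cond_type_class_def by auto
  qed
  show ?thesis
    unfolding Let_def
    using P1 P2 unfolding T_def[symmetric] p_def[symmetric] s_def[symmetric] c_def[symmetric] l_def[symmetric] EZ_def[symmetric]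
    by simp
qed

end
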